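(* In the setting of the context, let $v\in J^k_o(X)$, choose $h\in\hat J^k(X)$ with $\delta_2(h)=v$, and write $h|_A=i_2(\{\gamma_A\})$, $h|_B=i_2(\{\gamma_B\})$ with $\gamma_A\in\mathbf\Lambda^{k-1}(A)$, $\gamma_B\in\mathbf\Lambda^{k-1}(B)$ (possible since $\delta_2(h|_A)=0=\delta_2(h|_B)$). Then $\gamma_A|_D-\gamma_B|_D\in\mathbf\Lambda^{k-1}_J(D)$, and its class $\Omega(v)$ in $Q_D:=\mathbf\Lambda^{k-1}_J(D)/(\mathbf\Lambda^{k-1}_J(A)|_D+\mathbf\Lambda^{k-1}_J(B)|_D)$ is independent of the choices of $h$ and of the representatives $\gamma_A,\gamma_B$. The resulting map $\Omega:J^k_o(X)\to Q_D$ is a group homomorphism.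
   Context: Let $J^*$ be a $\mathbb{Z}$-graded generalized cohomology theory on smooth manifolds (with corners) such that $J^k(\mathrm{pt})$ is finitely generated for every $k$; write $J^k(M;\mathbb{Z})=J^k(M)$, and $J^k(M;\mathbb{R})$, $J^k(M;\mathbb{R}/\mathbb{Z})$ for the associated theories with real and $\mathbb{R}/\mathbb{Z}$ coefficients. For $F=\mathbb{Q},\mathbb{R}$ set $\mathbf H^k(M;F)=\bigoplus_{j\ge0}H^j(M;J^{k-j}(\mathrm{pt})\otimes F)$, and $\mathbf\Lambda^k(M)=\bigoplus_{j\ge0}\Omega^j(M;J^{k-j}(\mathrm{pt})\otimes\mathbb{R})$ (smooth forms), with exterior derivative $d$. Let $ch:J^k(M;\mathbb{Z})\to\mathbf H^k(M;\mathbb{Q})$ be the canonical (Chern character) map, $i_\mathbb{R}:\mathbf H^k(M;\mathbb{Q})\to\mathbf H^k(M;\mathbb{R})$ the coefficient map, and $\mathbf\Lambda^k_J(M)$ the closed forms in $\mathbf\Lambda^k(M)$ whose de Rham class lies in $i_\mathbb{R}(ch(J^k(M;\mathbb{Z})))$. Let $p:\mathbf H^{k-1}(M;\mathbb{R})\to J^{k-1}(M;\mathbb{R}/\mathbb{Z})$ be induced by $\mathbb{R}\to\mathbb{R}/\mathbb{Z}$ and $b$ the Bockstein. $\hat J^k$ is a differential cohomology functor associated to $J$: a functor from smooth manifolds with corners to abelian groups with natural transformations $i_1:J^{k-1}(\cdot;\mathbb{R}/\mathbb{Z})\to\hat J^k$, $i_2:\mathbf\Lambda^{k-1}/\mathbf\Lambda^{k-1}_J\to\hat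 J^k$, $\delta_1:\hat J^k\to\mathbf\Lambda^k_J$, $\delta_2:\hat J^k\to J^k(\cdot;\mathbb{Z})$ such that $0\to J^{k-1}(\mathbb{R}/\mathbb{Z})\xrightarrow{i_1}\hat J^k\xrightarrow{\delta_1}\mathbf\Lambda^k_J\to0$ and $0\to\mathbf\Lambda^{k-1}/\mathbf\Lambda^{k-1}_J\xrightarrow{i_2}\hat J^k\xrightarrow{\delta_2}J^k(\mathbb{Z})\to0$ are exact, $\delta_2 i_1=b$, $\delta_1 i_2=d$, $i_1\circ p=i_2\circ\mathrm{deRh}$ (deRh sending a real class to the class of a closed representative), and $\mathrm{deRh}\circ\delta_1=i_\mathbb{R}\circ ch\circ\delta_2$ (deRh sending a closed form to its class). Geometric setting: $X$ is a compact smooth manifold, $X=A\cup B$ with $A,B$ compact codimension-$0$ submanifolds, $D=A\cap B$ a codimension-$0$ submanifold with collar neighborhoods in both $A$ and $B$. $J^k_o(X)=\{v\in J^k(X;\mathbb{Z}): v|_A=0=v|_B\}$. For a form $\alpha$, $\{\alpha\}$ denotes its class modulo $\mathbf\Lambda^{k-1}_J$. *)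

theory Defs
  imports Main
begin

text \<open>Abstract (algebraic) model of the data of a differential cohomology functor
evaluated on one manifold M, restricted to what is relevant for degree k.
  form_d   : d : Lambda^{k-1}(M) -> Lambda^k(M)
  form_dR  : deRh : closed forms in Lambda^{k-1}(M) -> H^{k-1}(M;R)
  chern    : ch : J^{k-1}(M;Z) -> H^{k-1}(M;Q)
  coefR    : i_R : H^{k-1}(M;Q) -> H^{k-1}(M;R)
  iota2    : Lambda^{k-1}(M) -> Lambda^{k-1}/Lambda^{k-1}_J -> hatJ^k(M)  (i_2 composed with projection)
  delta2   : hatJ^k(M) -> J^k(M;Z)\<close>

record ('f, 'g, 'r, 'q, 'c, 'h, 'j) dcspace =
  form_d :: "'f \<Rightarrow> 'g"
  form_dR :: "'f \<Rightarrow> 'r"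
  chern :: "'c \<Rightarrow> 'q"
  coefR :: "'q \<Rightarrow> 'r"
  iota2 :: "'f \<Rightarrow> 'h"
  delta2 :: "'h \<Rightarrow> 'j"

record ('f, 'g, 'r, 'q, 'c, 'h, 'j, 'f2, 'g2, 'r2, 'q2, 'c2, 'h2, 'j2) dcrestr =
  res_f :: "'f \<Rightarrow> 'f2"
  res_g :: "'g \<Rightarrow> 'g2"
  res_r :: "'r \<Rightarrow> 'r2"
  res_q :: "'q \<Rightarrow> 'q2"
  res_c :: "'c \<Rightarrow> 'c2"
  res_h :: "'h \<Rightarrow> 'h2"
  res_j :: "'j \<Rightarrow> 'j2"

definition hom_add :: "('a::ab_group_add \<Rightarrow> 'b::ab_group_add) \<Rightarrow> bool" where
  "hom_add f \<longleftrightarrow> (\<forall>x y. f (x + y) = f x + f y)"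

definition closed_forms :: "('f::ab_group_add, 'g::ab_group_add, 'r, 'q, 'c, 'h, 'j, 'z) dcspace_scheme \<Rightarrow> 'f set" where
  "closed_forms S = {\<omega>. form_d S \<omega> = 0}"

definition LambdaJ :: "('f::ab_group_add, 'g::ab_group_add, 'r, 'q, 'c, 'h, 'j, 'z) dcspace_scheme \<Rightarrow> 'f set" where
  "LambdaJ S = {\<omega>. form_d S \<omega> = 0 \<and> form_dR S \<omega> \<in> range (\<lambda>c. coefR S (chern S c))}"

text \<open>Axioms of the data on one manifold: all maps are homomorphisms (deRh on closed forms),
iota2 induces an injective map on Lambda^{k-1}/Lambda^{k-1}_J, and the sequence
0 -> Lambda^{k-1}/Lambda^{k-1}_J -> hatJ^k -> J^k(Z) -> 0 is exact.\<close>
definition dc_space ::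
  "('f::ab_group_add, 'g::ab_group_add, 'r::ab_group_add, 'q::ab_group_add, 'c::ab_group_add,
    'h::ab_group_add, 'j::ab_group_add) dcspace \<Rightarrow> bool" where
  "dc_space S \<longleftrightarrow>
     hom_add (form_d S) \<and> hom_add (chern S) \<and> hom_add (coefR S) \<and>
     hom_add (iota2 S) \<and> hom_add (delta2 S) \<and>
     (\<forall>x\<in>closed_forms S. \<forall>y\<in>closed_forms S. form_dR S (x + y) = form_dR S x + form_dR S y) \<and>
     (\<forall>\<omega>. iota2 S \<omega> = 0 \<longleftrightarrow> \<omega> \<in> LambdaJ S) \<and>
     (\<forall>h. delta2 S h = 0 \<longleftrightarrow> h \<in> range (iota2 S)) \<and>
     surj (delta2 S)"

definition dc_restr ::
  "('f::ab_group_add, 'g::ab_group_add, 'r::ab_group_add, 'q::ab_group_add, 'c::ab_group_add,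
    'h::ab_group_add, 'j::ab_group_add) dcspace \<Rightarrow>
   ('f2::ab_group_add, 'g2::ab_group_add, 'r2::ab_group_add, 'q2::ab_group_add, 'c2::ab_group_add,
    'h2::ab_group_add, 'j2::ab_group_add) dcspace \<Rightarrow>
   ('f, 'g, 'r, 'q, 'c, 'h, 'j, 'f2, 'g2, 'r2, 'q2, 'c2, 'h2, 'j2) dcrestr \<Rightarrow> bool" where
  "dc_restr S T \<rho> \<longleftrightarrow>
     hom_add (res_f \<rho>) \<and> hom_add (res_g \<rho>) \<and> hom_add (res_r \<rho>) \<and> hom_add (res_q \<rho>) \<and>
     hom_add (res_c \<rho>) \<and> hom_add (res_h \<rho>) \<and> hom_add (res_j \<rho>) \<and>
     (\<forall>\<omega>. res_g \<rho> (form_d S \<omega>) = form_d T (res_f \<rho> \<omega>)) \<and>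
     (\<forall>\<omega>\<in>closed_forms S. res_r \<rho> (form_dR S \<omega>) = form_dR T (res_f \<rho> \<omega>)) \<and>
     (\<forall>c. res_q \<rho> (chern S c) = chern T (res_c \<rho> c)) \<and>
     (\<forall>q. res_r \<rho> (coefR S q) = coefR T (res_q \<rho> q)) \<and>
     (\<forall>\<omega>. res_h \<rho> (iota2 S \<omega>) = iota2 T (res_f \<rho> \<omega>)) \<and>
     (\<forall>h. res_j \<rho> (delta2 S h) = delta2 T (res_h \<rho> h))"

text \<open>Functoriality for the square X -> A -> D, X -> B -> D: both composite restrictions X -> D agree.\<close>
definition restr_commute ::
  "('f, 'g, 'r, 'q, 'c, 'h, 'j, 'f1, 'g1, 'r1, 'q1, 'c1, 'h1, 'j1) dcrestr \<Rightarrow>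
   ('f1, 'g1, 'r1, 'q1, 'c1, 'h1, 'j1, 'f3, 'g3, 'r3, 'q3, 'c3, 'h3, 'j3) dcrestr \<Rightarrow>
   ('f, 'g, 'r, 'q, 'c, 'h, 'j, 'f2, 'g2, 'r2, 'q2, 'c2, 'h2, 'j2) dcrestr \<Rightarrow>
   ('f2, 'g2, 'r2, 'q2, 'c2, 'h2, 'j2, 'f3, 'g3, 'r3, 'q3, 'c3, 'h3, 'j3) dcrestr \<Rightarrow> bool" where
  "restr_commute \<rho>XA \<rho>AD \<rho>XB \<rho>BD \<longleftrightarrow>
     res_f \<rho>AD \<circ> res_f \<rho>XA = res_f \<rho>BD \<circ> res_f \<rho>XB \<and>
     res_g \<rho>AD \<circ> res_g \<rho>XA = res_g \<rho>BD \<circ> res_g \<rho>XB \<and>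
     res_r \<rho>AD \<circ> res_r \<rho>XA = res_r \<rho>BD \<circ> res_r \<rho>XB \<and>
     res_q \<rho>AD \<circ> res_q \<rho>XA = res_q \<rho>BD \<circ> res_q \<rho>XB \<and>
     res_c \<rho>AD \<circ> res_c \<rho>XA = res_c \<rho>BD \<circ> res_c \<rho>XB \<and>
     res_h \<rho>AD \<circ> res_h \<rho>XA = res_h \<rho>BD \<circ> res_h \<rho>XB \<and>
     res_j \<rho>AD \<circ> res_j \<rho>XA = res_j \<rho>BD \<circ> res_j \<rho>XB"

definition Jo where
  "Jo \<rho>XA \<rho>XB = {v. res_j \<rho>XA v = 0 \<and> res_j \<rho>XB v = 0}"

definition admissible where
  "admissible SX SA SB \<rho>XA \<rho>XB v h \<gamma>A \<gamma>B \<longleftrightarrow>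
     delta2 SX h = v \<and> res_h \<rho>XA h = iota2 SA \<gamma>A \<and> res_h \<rho>XB h = iota2 SB \<gamma>B"

text \<open>The subgroup Lambda_J(A)|_D + Lambda_J(B)|_D of Lambda_J(D) by which Q_D is the quotient.\<close>
definition QDsub where
  "QDsub SA SB \<rho>AD \<rho>BD =
     {res_f \<rho>AD a + res_f \<rho>BD b | a b. a \<in> LambdaJ SA \<and> b \<in> LambdaJ SB}"

text \<open>Omega(v): the set of all gamma_A|_D - gamma_B|_D + s, over all admissible choices and
all s in QDsub, i.e. (by well-definedness) the coset in Q_D.\<close>
definition Omega where
  "Omega SX SA SB \<rho>XA \<rho>XB \<rho>AD \<rho>BD v =
     {res_f \<rho>AD \<gamma>A - res_f \<rho>BD \<gamma>B + s | h \<gamma>A \<gamma>B s.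
        admissible SX SA SB \<rho>XA \<rho>XB v h \<gamma>A \<gamma>B \<and> s \<in> QDsub SA SB \<rho>AD \<rho>BD}"

end

theory Submission
  imports Defs
begin

lemma hom_add_0: "hom_add f \<Longrightarrow> f 0 = 0"
  unfolding hom_add_def by (metis add_cancel_right_right add_0)

lemma hom_add_diff: "hom_add f \<Longrightarrow> f (x - y) = f x - f y"
  unfolding hom_add_def by (metis diff_add_cancel eq_diff_eq)

lemma hom_add_add: "hom_add f \<Longrightarrow> f (x + y) = f x + f y"
  unfolding hom_add_def by blast

lemma hom_add_uminus: "hom_add f \<Longrightarrow> f (- x) = - f x"
  by (metis hom_add_diff diff_0 hom_add_0)

lemma LJ_iff: "dc_space S \<Longrightarrow> \<omega> \<in> LambdaJ S \<longleftrightarrow> iota2 S \<omega> = 0"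
  unfolding dc_space_def by blast

lemma admissible_sub:
  assumes "dc_space SX" "dc_space SA" "dc_space SB"
    "dc_restr SX SA \<rho>XA" "dc_restr SX SB \<rho>XB"
    "admissible SX SA SB \<rho>XA \<rho>XB v h \<gamma>A \<gamma>B"
    "admissible SX SA SB \<rho>XA \<rho>XB v' h' \<gamma>A' \<gamma>B'"
  shows "admissible SX SA SB \<rho>XA \<rho>XB (v - v') (h - h') (\<gamma>A - \<gamma>A') (\<gamma>B - \<gamma>B')"
  using assms unfolding admissible_def dc_space_def dc_restr_def
  by (simp add: hom_add_diff)

lemma admissible_add:
  assumes "dc_space SX" "dc_space SA" "dc_space SB"
    "dc_restr SX SA \<rho>XA" "dc_restr SX SB \<rho>XB"
    "admissible SX SA SB \<rho>XA \<rho>XB v h \<gamma>A \<gamma>B"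
    "admissible SX SA SB \<rho>XA \<rho>XB v' h' \<gamma>A' \<gamma>B'"
  shows "admissible SX SA SB \<rho>XA \<rho>XB (v + v') (h + h') (\<gamma>A + \<gamma>A') (\<gamma>B + \<gamma>B')"
  using assms unfolding admissible_def dc_space_def dc_restr_def
  by (simp add: hom_add_add)

theorem mainTheorem2:
  assumes "dc_space SX" and "dc_space SA" and "dc_space SB" and "dc_space SD"
    and "dc_restr SX SA \<rho>XA" and "dc_restr SX SB \<rho>XB"
    and "dc_restr SA SD \<rho>AD" and "dc_restr SB SD \<rho>BD"
    and "restr_commute \<rho>XA \<rho>AD \<rho>XB \<rho>BD"
  shows
    "(\<forall>v \<in> Jo \<rho>XA \<rho>XB. \<exists>h \<gamma>A \<gamma>B. admissible SX SA SB \<rho>XA \<rho>XB v h \<gamma>A \<gamma>B)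
   \<and> (\<forall>v \<in> Jo \<rho>XA \<rho>XB. \<forall>h \<gamma>A \<gamma>B. admissible SX SA SB \<rho>XA \<rho>XB v h \<gamma>A \<gamma>B \<longrightarrow>
        res_f \<rho>AD \<gamma>A - res_f \<rho>BD \<gamma>B \<in> LambdaJ SD)
   \<and> (\<forall>v \<in> Jo \<rho>XA \<rho>XB. \<forall>h \<gamma>A \<gamma>B h' \<gamma>A' \<gamma>B'.
        admissible SX SA SB \<rho>XA \<rho>XB v h \<gamma>A \<gamma>B \<longrightarrow>
        admissible SX SA SB \<rho>XA \<rho>XB v h' \<gamma>A' \<gamma>B' \<longrightarrow>
        (res_f \<rho>AD \<gamma>A - res_f \<rho>BD \<gamma>B) - (res_f \<rho>AD \<gamma>A' - res_f \<rho>BD \<gamma>B')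
          \<in> QDsub SA SB \<rho>AD \<rho>BD)
   \<and> QDsub SA SB \<rho>AD \<rho>BD \<subseteq> LambdaJ SD
   \<and> (\<forall>v \<in> Jo \<rho>XA \<rho>XB. \<forall>w \<in> Jo \<rho>XA \<rho>XB. v + w \<in> Jo \<rho>XA \<rho>XB \<and>
        Omega SX SA SB \<rho>XA \<rho>XB \<rho>AD \<rho>BD (v + w) =
          {a + b | a b. a \<in> Omega SX SA SB \<rho>XA \<rho>XB \<rho>AD \<rho>BD v \<and>
                        b \<in> Omega SX SA SB \<rho>XA \<rho>XB \<rho>AD \<rho>BD w})"
proof -
  note X = assms(1)[unfolded dc_space_def]
  note A = assms(2)[unfolded dc_space_def]
  note B = assms(3)[unfolded dc_space_def]
  note D = assms(4)[unfolded dc_space_def]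
  note XA = assms(5)[unfolded dc_restr_def]
  note XB = assms(6)[unfolded dc_restr_def]
  note AD = assms(7)[unfolded dc_restr_def]
  note BD = assms(8)[unfolded dc_restr_def]
  note C = assms(9)[unfolded restr_commute_def]
  have iA: "hom_add (iota2 SA)" using A by blast
  have iB: "hom_add (iota2 SB)" using B by blast
  have iD: "hom_add (iota2 SD)" using D by blast
  have ch: "res_h \<rho>AD (res_h \<rho>XA h) = res_h \<rho>BD (res_h \<rho>XB h)" for h
    using C by (metis comp_apply)
  have cf: "res_f \<rho>AD (res_f \<rho>XA x) = res_f \<rho>BD (res_f \<rho>XB x)" for x
    using C by (metis comp_apply)
  have P1: "\<exists>h \<gamma>A \<gamma>B. admissible SX SA SB \<rho>XA \<rho>XB v h \<gamma>A \<gamma>B" if "v \<in> Jo \<rho>XA \<rho>XB" for v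
  proof -
    have sX: "surj (delta2 SX)" using X by blast
    obtain h where h: "delta2 SX h = v" using sX by (metis surjD)
    have nA: "res_j \<rho>XA (delta2 SX h) = delta2 SA (res_h \<rho>XA h)" using XA by blast
    have nB: "res_j \<rho>XB (delta2 SX h) = delta2 SB (res_h \<rho>XB h)" using XB by blast
    have "delta2 SA (res_h \<rho>XA h) = 0" using that h nA unfolding Jo_def by simp
    then obtain a where a: "res_h \<rho>XA h = iota2 SA a" using A by blast
    have "delta2 SB (res_h \<rho>XB h) = 0" using that h nB unfolding Jo_def by simp
    then obtain b where b: "res_h \<rho>XB h = iota2 SB b" using B by blast
    show ?thesis using h a b unfolding admissible_def by blast
  qed
  have P2: "res_f \<rho>AD \<gamma>A - res_f \<rho>BD \<gamma>B \<in> LambdaJ SD"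
    if "admissible SX SA SB \<rho>XA \<rho>XB v h \<gamma>A \<gamma>B" for v h \<gamma>A \<gamma>B
  proof -
    have "iota2 SD (res_f \<rho>AD \<gamma>A) = iota2 SD (res_f \<rho>BD \<gamma>B)"
      using that ch[of h] AD BD unfolding admissible_def by metis
    then show ?thesis using LJ_iff[OF assms(4)] hom_add_diff[OF iD] by simp
  qed
  have P3: "(res_f \<rho>AD \<gamma>A - res_f \<rho>BD \<gamma>B) - (res_f \<rho>AD \<gamma>A' - res_f \<rho>BD \<gamma>B')
          \<in> QDsub SA SB \<rho>AD \<rho>BD"
    if a1: "admissible SX SA SB \<rho>XA \<rho>XB v h \<gamma>A \<gamma>B"
    and a2: "admissible SX SA SB \<rho>XA \<rho>XB v h' \<gamma>A' \<gamma>B'" for v h \<gamma>A \<gamma>B h' \<gamma>A' \<gamma>B'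
  proof -
    have ad: "admissible SX SA SB \<rho>XA \<rho>XB 0 (h - h') (\<gamma>A - \<gamma>A') (\<gamma>B - \<gamma>B')"
      using admissible_sub[OF assms(1-3,5,6) a1 a2] by simp
    then obtain \<eta> where \<eta>: "h - h' = iota2 SX \<eta>" using X unfolding admissible_def by blast
    have "iota2 SA (\<gamma>A - \<gamma>A') = iota2 SA (res_f \<rho>XA \<eta>)"
      using ad \<eta> XA unfolding admissible_def by metis
    hence a: "\<gamma>A - \<gamma>A' - res_f \<rho>XA \<eta> \<in> LambdaJ SA"
      using LJ_iff[OF assms(2)] hom_add_diff[OF iA] by simp
    have "iota2 SB (\<gamma>B - \<gamma>B') = iota2 SB (res_f \<rho>XB \<eta>)"
      using ad \<eta> XB unfolding admissible_def by metis
    hence z0: "iota2 SB (\<gamma>B - \<gamma>B' - res_f \<rho>XB \<eta>) = 0"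
      using hom_add_diff[OF iB] by simp
    have "iota2 SB (- (\<gamma>B - \<gamma>B' - res_f \<rho>XB \<eta>)) = 0"
      using hom_add_diff[OF iB, of 0 "\<gamma>B - \<gamma>B' - res_f \<rho>XB \<eta>"] hom_add_0[OF iB] z0
      by (metis diff_0 diff_self)
    hence b: "- (\<gamma>B - \<gamma>B' - res_f \<rho>XB \<eta>) \<in> LambdaJ SB"
      using LJ_iff[OF assms(3)] by blast
    have hAD: "hom_add (res_f \<rho>AD)" and hBD: "hom_add (res_f \<rho>BD)" using AD BD by auto
    have "(res_f \<rho>AD \<gamma>A - res_f \<rho>BD \<gamma>B) - (res_f \<rho>AD \<gamma>A' - res_f \<rho>BD \<gamma>B')
        = res_f \<rho>AD (\<gamma>A - \<gamma>A' - res_f \<rho>XA \<eta>) + res_f \<rho>BD (- (\<gamma>B - \<gamma>B' - res_f \<rho>XB \<eta>))"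
      unfolding hom_add_diff[OF hAD] hom_add_uminus[OF hBD] hom_add_diff[OF hBD] cf[of \<eta>]
      by (simp add: algebra_simps)
    then show ?thesis using a b unfolding QDsub_def by blast
  qed
  have P4: "QDsub SA SB \<rho>AD \<rho>BD \<subseteq> LambdaJ SD"
  proof
    fix x assume "x \<in> QDsub SA SB \<rho>AD \<rho>BD"
    then obtain a b where x: "x = res_f \<rho>AD a + res_f \<rho>BD b"
      and a: "a \<in> LambdaJ SA" and b: "b \<in> LambdaJ SB" unfolding QDsub_def by blast
    have "iota2 SD x = res_h \<rho>AD (iota2 SA a) + res_h \<rho>BD (iota2 SB b)"
      using x D AD BD by (simp add: hom_add_add)
    also have "\<dots> = 0" using a b LJ_iff[OF assms(2)] LJ_iff[OF assms(3)] AD BD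
      by (simp add: hom_add_0)
    finally show "x \<in> LambdaJ SD" using LJ_iff[OF assms(4)] by simp
  qed
  have Q0: "0 \<in> QDsub SA SB \<rho>AD \<rho>BD"
  proof -
    have "0 \<in> LambdaJ SA" using LJ_iff[OF assms(2)] hom_add_0[OF iA] by simp
    moreover have "0 \<in> LambdaJ SB" using LJ_iff[OF assms(3)] hom_add_0[OF iB] by simp
    moreover have "res_f \<rho>AD 0 + res_f \<rho>BD 0 = 0" using AD BD by (simp add: hom_add_0)
    ultimately show ?thesis unfolding QDsub_def by (metis (mono_tags, lifting) mem_Collect_eq)
  qed
  have hAD: "hom_add (res_f \<rho>AD)" and hBD: "hom_add (res_f \<rho>BD)" using AD BD by auto
  have Qadd: "s1 + s2 \<in> QDsub SA SB \<rho>AD \<rho>BD"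
    if q1: "s1 \<in> QDsub SA SB \<rho>AD \<rho>BD" and q2: "s2 \<in> QDsub SA SB \<rho>AD \<rho>BD" for s1 s2
  proof -
    obtain a b where s1: "s1 = res_f \<rho>AD a + res_f \<rho>BD b"
      and a: "a \<in> LambdaJ SA" and b: "b \<in> LambdaJ SB" using q1 unfolding QDsub_def by blast
    obtain a' b' where s2: "s2 = res_f \<rho>AD a' + res_f \<rho>BD b'"
      and a': "a' \<in> LambdaJ SA" and b': "b' \<in> LambdaJ SB" using q2 unfolding QDsub_def by blast
    have "a + a' \<in> LambdaJ SA" using a a' LJ_iff[OF assms(2)] hom_add_add[OF iA] by simp
    moreover have "b + b' \<in> LambdaJ SB" using b b' LJ_iff[OF assms(3)] hom_add_add[OF iB] by simp
    moreover have "s1 + s2 = res_f \<rho>AD (a + a') + res_f \<rho>BD (b + b')"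
      unfolding s1 s2 hom_add_add[OF hAD] hom_add_add[OF hBD] by (simp add: algebra_simps)
    ultimately show ?thesis unfolding QDsub_def by blast
  qed
  have P5: "v + w \<in> Jo \<rho>XA \<rho>XB \<and>
        Omega SX SA SB \<rho>XA \<rho>XB \<rho>AD \<rho>BD (v + w) =
          {a + b | a b. a \<in> Omega SX SA SB \<rho>XA \<rho>XB \<rho>AD \<rho>BD v \<and>
                        b \<in> Omega SX SA SB \<rho>XA \<rho>XB \<rho>AD \<rho>BD w}"
    if v: "v \<in> Jo \<rho>XA \<rho>XB" and w: "w \<in> Jo \<rho>XA \<rho>XB" for v w
  proof
    have jA: "hom_add (res_j \<rho>XA)" and jB: "hom_add (res_j \<rho>XB)" using XA XB by auto
    show "v + w \<in> Jo \<rho>XA \<rho>XB" using v w unfolding Jo_def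
      using hom_add_add[OF jA] hom_add_add[OF jB] by simp
    show "Omega SX SA SB \<rho>XA \<rho>XB \<rho>AD \<rho>BD (v + w) =
          {a + b | a b. a \<in> Omega SX SA SB \<rho>XA \<rho>XB \<rho>AD \<rho>BD v \<and>
                        b \<in> Omega SX SA SB \<rho>XA \<rho>XB \<rho>AD \<rho>BD w}"
    proof (rule set_eqI, rule iffI)
      fix x assume "x \<in> Omega SX SA SB \<rho>XA \<rho>XB \<rho>AD \<rho>BD (v + w)"
      then obtain h gA gB s where ad: "admissible SX SA SB \<rho>XA \<rho>XB (v + w) h gA gB"
        and s: "s \<in> QDsub SA SB \<rho>AD \<rho>BD" and x: "x = res_f \<rho>AD gA - res_f \<rho>BD gB + s"
        unfolding Omega_def by blast
      obtain h1 a1 b1 where ad1: "admissible SX SA SB \<rho>XA \<rho>XB v h1 a1 b1" using P1[OF v] by blast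
      have ad2: "admissible SX SA SB \<rho>XA \<rho>XB w (h - h1) (gA - a1) (gB - b1)"
        using admissible_sub[OF assms(1-3,5,6) ad ad1] by simp
      have m1: "res_f \<rho>AD a1 - res_f \<rho>BD b1 + 0 \<in> Omega SX SA SB \<rho>XA \<rho>XB \<rho>AD \<rho>BD v"
        unfolding Omega_def using ad1 Q0 by blast
      have m2: "res_f \<rho>AD (gA - a1) - res_f \<rho>BD (gB - b1) + s \<in> Omega SX SA SB \<rho>XA \<rho>XB \<rho>AD \<rho>BD w"
        unfolding Omega_def using ad2 s by blast
      have "x = (res_f \<rho>AD a1 - res_f \<rho>BD b1 + 0) + (res_f \<rho>AD (gA - a1) - res_f \<rho>BD (gB - b1) + s)"
        unfolding x hom_add_diff[OF hAD] hom_add_diff[OF hBD] by (simp add: algebra_simps)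
      then show "x \<in> {a + b | a b. a \<in> Omega SX SA SB \<rho>XA \<rho>XB \<rho>AD \<rho>BD v \<and>
                        b \<in> Omega SX SA SB \<rho>XA \<rho>XB \<rho>AD \<rho>BD w}" using m1 m2 by blast
    next
      fix x assume "x \<in> {a + b | a b. a \<in> Omega SX SA SB \<rho>XA \<rho>XB \<rho>AD \<rho>BD v \<and>
                        b \<in> Omega SX SA SB \<rho>XA \<rho>XB \<rho>AD \<rho>BD w}"
      then obtain a b where x: "x = a + b" and a: "a \<in> Omega SX SA SB \<rho>XA \<rho>XB \<rho>AD \<rho>BD v"
        and b: "b \<in> Omega SX SA SB \<rho>XA \<rho>XB \<rho>AD \<rho>BD w" by blast
      obtain h1 a1 b1 s1 where ad1: "admissible SX SA SB \<rho>XA \<rho>XB v h1 a1 b1"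
        and s1: "s1 \<in> QDsub SA SB \<rho>AD \<rho>BD" and a': "a = res_f \<rho>AD a1 - res_f \<rho>BD b1 + s1"
        using a unfolding Omega_def by blast
      obtain h2 a2 b2 s2 where ad2: "admissible SX SA SB \<rho>XA \<rho>XB w h2 a2 b2"
        and s2: "s2 \<in> QDsub SA SB \<rho>AD \<rho>BD" and b': "b = res_f \<rho>AD a2 - res_f \<rho>BD b2 + s2"
        using b unfolding Omega_def by blast
      have ad: "admissible SX SA SB \<rho>XA \<rho>XB (v + w) (h1 + h2) (a1 + a2) (b1 + b2)"
        using admissible_add[OF assms(1-3,5,6) ad1 ad2] .
      have "x = res_f \<rho>AD (a1 + a2) - res_f \<rho>BD (b1 + b2) + (s1 + s2)"
        unfolding x a' b' hom_add_add[OF hAD] hom_add_add[OF hBD] by (simp add: algebra_simps)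
      then show "x \<in> Omega SX SA SB \<rho>XA \<rho>XB \<rho>AD \<rho>BD (v + w)"
        unfolding Omega_def using ad Qadd[OF s1 s2] by blast
    qed
  qed
  show ?thesis using P1 P2 P3 P4 P5 by blast
qed
end
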